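(* Let $(\pi,I)$ be an optimal deterministic Markovian policy, with value function $\Pi(\delta)$. For any $\varepsilon>0$ there exists a continuous randomized Markovian policy $(\pi_c,I_c)$ with expected payoff function $\widehat\Pi(\delta)$ such that $\|\Pi-\widehat\Pi\|_1<\varepsilon$, where $\|\cdot\|_1$ is the $L^1$ norm on $[0,1]$.
   Context: A decision maker chooses an action from a finite set $\mathcal{A}$ with reward $\mathcal{R}(a,\Theta)$, $\Theta\in\{\theta_0,\theta_1\}$ unknown; $G(\delta)=\max_{a\in\mathcal{A}}\{\delta\mathcal{R}(a,\theta_0)+(1-\delta)\mathcal{R}(a,\theta_1)\}$ where $\delta$ is the belief that $\Theta=\theta_0$. There is a finite set $\mathcal{E}$ of experiments, each $E$ with finite outcome set $\mathcal{X}_E$, outcome probabilities $Q(x,E,\theta)$ and likelihood ratio $\mathcal{L}(x,E)=Q(x,E,\theta_1)/Q(x,E,\theta_0)$; every experiment is informative. Experiments are performed at the jumps of a Poisson process of rate $\Lambda>0$; after outcome $x$ of experiment $E$ the belief jumps from $\delta$ to $\delta/(\delta+(1-\delta)\mathcal{L}(x,E))$. Discount rate $r>0$. A deterministic Markovian policy is a pair $(\pi,I)$ with $\pi:[0,1]\to\mathcal{E}$ measurable and $I\subseteq[0,1]$ Borel: while the belief $\delta\notin I$ the DM uses experiment $\pi(\delta)$; at $\tau=\inf\{t>0:\delta_t\in I\}$ she stops and collects $G(\delta_\tau)$; its expected payoff from initial belief $\delta$ is $\mathbb{E}_\delta[e^{-r\tau}G(\delta_\tau)]$. It is optimal if its payoff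 equals the optimal value $\Pi(\delta)=\sup\mathbb{E}_\delta[e^{-r\tau}G(\delta_\tau)]$ for every $\delta$. A continuous randomized Markovian policy is a pair $(\pi_c,I_c)$ with $I_c$ Borel and $\pi_c:[0,1]\to\Delta(\mathcal{E})$ such that $\delta\mapsto\pi_c(\delta,E)$ is continuous for every $E$: for $\delta\notin I_c$ experiment $E$ is used with probability $\pi_c(\delta,E)$, and the DM stops upon entering $I_c$, collecting $G$ at the stopping belief. *)

theory Defs
  imports "HOL-Analysis.Analysis"
begin

datatype theta = Theta0 | Theta1

text \<open>Value of stopping at belief d (belief that Theta = Theta0).\<close>
definition Gval :: "'a set \<Rightarrow> ('a \<Rightarrow> theta \<Rightarrow> real) \<Rightarrow> real \<Rightarrow> real" where
  "Gval A R d = Max ((\<lambda>a. d * R a Theta0 + (1 - d) * R a Theta1) ` A)"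

definition lik :: "('x \<Rightarrow> 'e \<Rightarrow> theta \<Rightarrow> real) \<Rightarrow> 'x \<Rightarrow> 'e \<Rightarrow> real" where
  "lik Q x E = Q x E Theta1 / Q x E Theta0"

definition pout :: "('x \<Rightarrow> 'e \<Rightarrow> theta \<Rightarrow> real) \<Rightarrow> 'x \<Rightarrow> 'e \<Rightarrow> real \<Rightarrow> real" where
  "pout Q x E d = d * Q x E Theta0 + (1 - d) * Q x E Theta1"

text \<open>Posterior belief after outcome x of E (Bayes rule; equals d/(d+(1-d)L(x,E))
  whenever the likelihood ratio is defined, i.e. Q(x,E,Theta0) > 0).\<close>
definition upd :: "('x \<Rightarrow> 'e \<Rightarrow> theta \<Rightarrow> real) \<Rightarrow> 'x \<Rightarrow> 'e \<Rightarrow> real \<Rightarrow> real" where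
  "upd Q x E d = d * Q x E Theta0 / pout Q x E d"

definition model_ok :: "'a set \<Rightarrow> 'e set \<Rightarrow> ('e \<Rightarrow> 'x set) \<Rightarrow> ('x \<Rightarrow> 'e \<Rightarrow> theta \<Rightarrow> real) \<Rightarrow> real \<Rightarrow> real \<Rightarrow> bool" where
  "model_ok A Es X Q Lam r \<longleftrightarrow>
     finite A \<and> A \<noteq> {} \<and> finite Es \<and> Es \<noteq> {} \<and> Lam > 0 \<and> r > 0 \<and>
     (\<forall>E\<in>Es. finite (X E) \<and> X E \<noteq> {} \<and>
        (\<forall>th. (\<forall>x\<in>X E. Q x E th \<ge> 0) \<and> (\<Sum>x\<in>X E. Q x E th) = 1) \<and>
        (\<exists>x\<in>X E. Q x E Theta0 \<noteq> Q x E Theta1))"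

type_synonym ('e, 'x) hist = "('e \<times> 'x) list"

text \<open>General (history-dependent, randomized) policy on the embedded chain of experiment
  times: at history h and current belief d it stops with probability s h d; otherwise it
  runs experiment E with probability c h d E at the next arrival of the Poisson clock.
  hpay n h d is the expected discounted payoff collected from stopping within the next n
  arrivals; each arrival contributes the discount factor E[e^{-r T}] = Lam/(Lam+r).\<close>
primrec hpay :: "real \<Rightarrow> 'e set \<Rightarrow> ('e \<Rightarrow> 'x set) \<Rightarrow> ('x \<Rightarrow> 'e \<Rightarrow> theta \<Rightarrow> real) \<Rightarrow>
    (real \<Rightarrow> real) \<Rightarrow> (('e, 'x) hist \<Rightarrow> real \<Rightarrow> real) \<Rightarrow> (('e, 'x) hist \<Rightarrow> real \<Rightarrow> 'e \<Rightarrow> real) \<Rightarrow>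
    nat \<Rightarrow> ('e, 'x) hist \<Rightarrow> real \<Rightarrow> real" where
  "hpay b Es X Q g s c 0 h d = s h d * g d"
| "hpay b Es X Q g s c (Suc n) h d = s h d * g d + (1 - s h d) * b *
     (\<Sum>E\<in>Es. c h d E * (\<Sum>x\<in>X E. pout Q x E d * hpay b Es X Q g s c n (h @ [(E, x)]) (upd Q x E d)))"

text \<open>Expected payoff E_d[e^{-r tau} G(delta_tau)] of a general policy (0 if it never stops).\<close>
definition payoff :: "'a set \<Rightarrow> ('a \<Rightarrow> theta \<Rightarrow> real) \<Rightarrow> 'e set \<Rightarrow> ('e \<Rightarrow> 'x set) \<Rightarrow>
    ('x \<Rightarrow> 'e \<Rightarrow> theta \<Rightarrow> real) \<Rightarrow> real \<Rightarrow> real \<Rightarrow>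
    (('e, 'x) hist \<Rightarrow> real \<Rightarrow> real) \<Rightarrow> (('e, 'x) hist \<Rightarrow> real \<Rightarrow> 'e \<Rightarrow> real) \<Rightarrow> real \<Rightarrow> real" where
  "payoff A R Es X Q Lam r s c d = lim (\<lambda>n. hpay (Lam / (Lam + r)) Es X Q (Gval A R) s c n [] d)"

definition valid_policy :: "'e set \<Rightarrow> (('e, 'x) hist \<Rightarrow> real \<Rightarrow> real) \<Rightarrow> (('e, 'x) hist \<Rightarrow> real \<Rightarrow> 'e \<Rightarrow> real) \<Rightarrow> bool" where
  "valid_policy Es s c \<longleftrightarrow> (\<forall>h. \<forall>d\<in>{0..1}. 0 \<le> s h d \<and> s h d \<le> 1 \<and>
      (\<forall>E\<in>Es. 0 \<le> c h d E) \<and> (\<Sum>E\<in>Es. c h d E) = 1)"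

definition optval :: "'a set \<Rightarrow> ('a \<Rightarrow> theta \<Rightarrow> real) \<Rightarrow> 'e set \<Rightarrow> ('e \<Rightarrow> 'x set) \<Rightarrow>
    ('x \<Rightarrow> 'e \<Rightarrow> theta \<Rightarrow> real) \<Rightarrow> real \<Rightarrow> real \<Rightarrow> real \<Rightarrow> real" where
  "optval A R Es X Q Lam r d =
     (SUP sc \<in> {(s, c). valid_policy Es s c}. payoff A R Es X Q Lam r (fst sc) (snd sc) d)"

definition det_payoff :: "'a set \<Rightarrow> ('a \<Rightarrow> theta \<Rightarrow> real) \<Rightarrow> 'e set \<Rightarrow> ('e \<Rightarrow> 'x set) \<Rightarrow>
    ('x \<Rightarrow> 'e \<Rightarrow> theta \<Rightarrow> real) \<Rightarrow> real \<Rightarrow> real \<Rightarrow> (real \<Rightarrow> 'e) \<Rightarrow> real set \<Rightarrow> real \<Rightarrow> real" where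
  "det_payoff A R Es X Q Lam r p I d =
     payoff A R Es X Q Lam r (\<lambda>h d. indicator I d) (\<lambda>h d E. if E = p d then 1 else 0) d"

definition det_markov_policy :: "'e set \<Rightarrow> (real \<Rightarrow> 'e) \<Rightarrow> real set \<Rightarrow> bool" where
  "det_markov_policy Es p I \<longleftrightarrow> (\<forall>d\<in>{0..1}. p d \<in> Es) \<and>
     p \<in> measurable (restrict_space borel {0..1::real}) (count_space Es) \<and>
     I \<in> sets borel \<and> I \<subseteq> {0..1}"

definition rand_payoff :: "'a set \<Rightarrow> ('a \<Rightarrow> theta \<Rightarrow> real) \<Rightarrow> 'e set \<Rightarrow> ('e \<Rightarrow> 'x set) \<Rightarrow>
    ('x \<Rightarrow> 'e \<Rightarrow> theta \<Rightarrow> real) \<Rightarrow> real \<Rightarrow> real \<Rightarrow> (real \<Rightarrow> 'e \<Rightarrow> real) \<Rightarrow> real set \<Rightarrow> real \<Rightarrow> real" where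
  "rand_payoff A R Es X Q Lam r pc Ic d =
     payoff A R Es X Q Lam r (\<lambda>h d. indicator Ic d) (\<lambda>h d E. pc d E) d"

definition cont_rand_markov_policy :: "'e set \<Rightarrow> (real \<Rightarrow> 'e \<Rightarrow> real) \<Rightarrow> real set \<Rightarrow> bool" where
  "cont_rand_markov_policy Es pc Ic \<longleftrightarrow>
     (\<forall>d\<in>{0..1}. (\<forall>E\<in>Es. 0 \<le> pc d E) \<and> (\<Sum>E\<in>Es. pc d E) = 1) \<and>
     (\<forall>E\<in>Es. continuous_on {0..1} (\<lambda>d. pc d E)) \<and>
     Ic \<in> sets borel \<and> Ic \<subseteq> {0..1}"

end

theory Submission
  imports Defs
begin

lemma geom_conv:
  fixes a :: "nat \<Rightarrow> real"
  assumes d: "\<And>n. \<bar>a (Suc n) - a n\<bar> \<le> K * q ^ n" and q: "0 \<le> q" "q < 1"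
  shows "convergent a" "\<bar>lim a - a N\<bar> \<le> K * q ^ N / (1 - q)"
proof -
  define u where "u n = a (Suc n) - a n" for n
  have sg: "summable (\<lambda>n. K * q ^ n)" using q by (intro summable_mult summable_geometric) auto
  have su: "summable u"
    by (rule summable_comparison_test[OF _ sg]) (use d in \<open>auto simp: u_def\<close>)
  have an: "a n = a 0 + (\<Sum>k<n. u k)" for n
    by (induction n) (auto simp: u_def)
  have lim1: "a \<longlonglongrightarrow> a 0 + suminf u"
    using su summable_LIMSEQ[OF su] by (subst an[abs_def]) (intro tendsto_add tendsto_const, simp)
  thus "convergent a" by (auto simp: convergent_def)
  hence lima: "lim a = a 0 + suminf u" using lim1 limI by blast
  have su': "summable (\<lambda>n. u (n + N))" using su by (simp add: summable_iff_shift)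
  have "lim a - a N = (\<Sum>n. u (n + N))"
    using suminf_minus_initial_segment[OF su, of N] lima an[of N] by simp
  also have "\<bar>\<dots>\<bar> \<le> (\<Sum>n. K * q ^ N * q ^ n)"
  proof -
    have b: "\<And>n. \<bar>u (n+N)\<bar> \<le> K * q ^ N * q ^ n" using d[of "n+N" for n] by (simp add: u_def power_add mult_ac)
    have sg2: "summable (\<lambda>n. K * q ^ N * q ^ n)" using q by (intro summable_mult summable_geometric) auto
    have sa: "summable (\<lambda>n. \<bar>u (n + N)\<bar>)"
      by (rule summable_comparison_test[OF _ sg2]) (use b in auto)
    have "\<bar>\<Sum>n. u (n + N)\<bar> \<le> (\<Sum>n. \<bar>u (n + N)\<bar>)" by (rule summable_rabs[OF sa])
    also have "\<dots> \<le> (\<Sum>n. K * q ^ N * q ^ n)"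
      by (rule suminf_le) (use b sa sg2 in auto)
    finally show ?thesis .
  qed
  also have "\<dots> = K * q ^ N / (1 - q)"
    using q by (simp add: suminf_mult suminf_geometric summable_geometric divide_simps)
  finally show "\<bar>lim a - a N\<bar> \<le> K * q ^ N / (1 - q)" .
qed

primrec mV :: "real \<Rightarrow> 'e set \<Rightarrow> ('e \<Rightarrow> 'x set) \<Rightarrow> ('x \<Rightarrow> 'e \<Rightarrow> theta \<Rightarrow> real) \<Rightarrow>
    (real \<Rightarrow> real) \<Rightarrow> (real \<Rightarrow> real) \<Rightarrow> (real \<Rightarrow> 'e \<Rightarrow> real) \<Rightarrow> nat \<Rightarrow> real \<Rightarrow> real" where
  "mV b Es X Q g s c 0 d = s d * g d"
| "mV b Es X Q g s c (Suc n) d = s d * g d + (1 - s d) * b *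
     (\<Sum>E\<in>Es. c d E * (\<Sum>x\<in>X E. pout Q x E d * mV b Es X Q g s c n (upd Q x E d)))"

lemma hpay_mV: "hpay b Es X Q g (\<lambda>h d. s d) (\<lambda>h d E. c d E) n h d = mV b Es X Q g s c n d"
  by (induction n arbitrary: h d) auto

definition avgE :: "'e set \<Rightarrow> ('e \<Rightarrow> 'x set) \<Rightarrow> ('x \<Rightarrow> 'e \<Rightarrow> theta \<Rightarrow> real) \<Rightarrow>
   (real \<Rightarrow> 'e \<Rightarrow> real) \<Rightarrow> (real \<Rightarrow> real) \<Rightarrow> real \<Rightarrow> real" where
  "avgE Es X Q c f d = (\<Sum>E\<in>Es. c d E * (\<Sum>x\<in>X E. pout Q x E d * f (upd Q x E d)))"

definition Tf :: "'e set \<Rightarrow> ('e \<Rightarrow> 'x set) \<Rightarrow> ('x \<Rightarrow> 'e \<Rightarrow> theta \<Rightarrow> real) \<Rightarrow>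
   (real \<Rightarrow> real) \<Rightarrow> real \<Rightarrow> real" where
  "Tf Es X Q f d = (\<Sum>E\<in>Es. \<Sum>x\<in>X E. pout Q x E d * f (upd Q x E d))"

definition vp :: "'e set \<Rightarrow> (real \<Rightarrow> 'e \<Rightarrow> real) \<Rightarrow> bool" where
  "vp Es c \<longleftrightarrow> (\<forall>d\<in>{0..1}. (\<forall>E\<in>Es. 0 \<le> c d E) \<and> (\<Sum>E\<in>Es. c d E) = 1)"

lemma mV_Suc: "mV b Es X Q g s c (Suc n) d = s d * g d + (1 - s d) * b * avgE Es X Q c (mV b Es X Q g s c n) d"
  by (simp add: avgE_def)

declare mV.simps(2)[simp del]

lemma vp_le1: "vp Es c \<Longrightarrow> finite Es \<Longrightarrow> d \<in> {0..1} \<Longrightarrow> E \<in> Es \<Longrightarrow> c d E \<le> 1"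
proof -
  assume a: "vp Es c" "finite Es" "d \<in> {0..1}" "E \<in> Es"
  have "c d E \<le> (\<Sum>E\<in>Es. c d E)" by (rule member_le_sum) (use a in \<open>auto simp: vp_def\<close>)
  thus ?thesis using a by (auto simp: vp_def)
qed

locale mdl =
  fixes A :: "'a set" and R :: "'a \<Rightarrow> theta \<Rightarrow> real"
    and Es :: "'e set" and X :: "'e \<Rightarrow> 'x set" and Q :: "'x \<Rightarrow> 'e \<Rightarrow> theta \<Rightarrow> real"
    and Lam r :: real
  assumes mok: "model_ok A Es X Q Lam r"
begin

lemma finEs: "finite Es" and finX: "E \<in> Es \<Longrightarrow> finite (X E)"
  using mok by (auto simp: model_ok_def)

lemma Qnn: "E \<in> Es \<Longrightarrow> x \<in> X E \<Longrightarrow> 0 \<le> Q x E th"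
  using mok by (auto simp: model_ok_def)

lemma Qsum: "E \<in> Es \<Longrightarrow> (\<Sum>x\<in>X E. Q x E th) = 1"
  using mok by (auto simp: model_ok_def)

lemma pout_nn: "E \<in> Es \<Longrightarrow> x \<in> X E \<Longrightarrow> d \<in> {0..1} \<Longrightarrow> 0 \<le> pout Q x E d"
  unfolding pout_def using Qnn[of E x] by auto

lemma sum_pout: "E \<in> Es \<Longrightarrow> (\<Sum>x\<in>X E. pout Q x E d) = 1"
  unfolding pout_def using Qsum[of E]
  by (simp add: sum.distrib sum_distrib_left[symmetric])

lemma upd_range: "E \<in> Es \<Longrightarrow> x \<in> X E \<Longrightarrow> d \<in> {0..1} \<Longrightarrow> upd Q x E d \<in> {0..1}"
proof -
  assume a: "E \<in> Es" "x \<in> X E" "d \<in> {0..1}"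
  have q: "0 \<le> Q x E Theta0" "0 \<le> Q x E Theta1" using Qnn[OF a(1,2)] by auto
  have "0 \<le> d * Q x E Theta0" "d * Q x E Theta0 \<le> pout Q x E d"
    using a(3) q unfolding pout_def by auto
  thus ?thesis unfolding upd_def
    by (cases "pout Q x E d = 0") (auto simp: divide_le_eq_1)
qed

lemma upd0: "upd Q x E 0 = 0" by (simp add: upd_def)

lemma upd1: "upd Q x E 1 = 0 \<or> upd Q x E 1 = 1"
  by (simp add: upd_def pout_def)

lemma pout_upd1: "upd Q x E 1 = 0 \<Longrightarrow> pout Q x E 1 = 0"
  by (simp add: upd_def pout_def split: if_splits)

lemma avg_bound:
  assumes "vp Es c" "d \<in> {0..1}" "\<And>y. y \<in> {0..1} \<Longrightarrow> \<bar>f y\<bar> \<le> K"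
  shows "\<bar>avgE Es X Q c f d\<bar> \<le> K"
proof -
  have c: "\<And>E. E \<in> Es \<Longrightarrow> 0 \<le> c d E" "(\<Sum>E\<in>Es. c d E) = 1" using assms(1,2) by (auto simp: vp_def)
  have "\<bar>avgE Es X Q c f d\<bar> \<le> (\<Sum>E\<in>Es. \<bar>c d E * (\<Sum>x\<in>X E. pout Q x E d * f (upd Q x E d))\<bar>)"
    unfolding avgE_def by (rule sum_abs)
  also have "\<dots> \<le> (\<Sum>E\<in>Es. c d E * K)"
  proof (rule sum_mono)
    fix E assume E: "E \<in> Es"
    have "\<bar>\<Sum>x\<in>X E. pout Q x E d * f (upd Q x E d)\<bar> \<le> (\<Sum>x\<in>X E. \<bar>pout Q x E d * f (upd Q x E d)\<bar>)"
      by (rule sum_abs)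
    also have "\<dots> \<le> (\<Sum>x\<in>X E. pout Q x E d * K)"
      by (rule sum_mono) (use E pout_nn upd_range assms(2,3) in \<open>auto simp: abs_mult intro!: mult_left_mono\<close>)
    also have "\<dots> = K" using sum_pout[OF E] by (simp add: sum_distrib_right[symmetric])
    finally show "\<bar>c d E * (\<Sum>x\<in>X E. pout Q x E d * f (upd Q x E d))\<bar> \<le> c d E * K"
      using c(1)[OF E] by (simp add: abs_mult mult_left_mono)
  qed
  also have "\<dots> = K" using c(2) by (simp add: sum_distrib_right[symmetric])
  finally show ?thesis .
qed

lemma avg_diff: "avgE Es X Q c f d - avgE Es X Q c f' d = avgE Es X Q c (\<lambda>y. f y - f' y) d"
  unfolding avgE_def sum_subtractf[symmetric] right_diff_distrib[symmetric] by simp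

definition Mb where "Mb = (\<Sum>a\<in>A. \<bar>R a Theta0\<bar> + \<bar>R a Theta1\<bar>)"

lemma G_bound: "d \<in> {0..1} \<Longrightarrow> \<bar>Gval A R d\<bar> \<le> Mb"
proof -
  assume d: "d \<in> {0..1}"
  have fA: "finite A" "A \<noteq> {}" using mok by (auto simp: model_ok_def)
  have each: "\<bar>d * R a Theta0 + (1 - d) * R a Theta1\<bar> \<le> Mb" if a: "a \<in> A" for a
  proof -
    have "\<bar>d * R a Theta0 + (1 - d) * R a Theta1\<bar> \<le> d * \<bar>R a Theta0\<bar> + (1 - d) * \<bar>R a Theta1\<bar>"
      using d by (auto simp: abs_mult intro!: order.trans[OF abs_triangle_ineq])
    also have "\<dots> \<le> \<bar>R a Theta0\<bar> + \<bar>R a Theta1\<bar>"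
      using d by (auto intro!: add_mono mult_left_le_one_le)
    also have "\<dots> \<le> Mb" unfolding Mb_def
      by (rule member_le_sum[OF a]) (auto simp: fA)
    finally show ?thesis .
  qed
  have "Gval A R d \<in> (\<lambda>a. d * R a Theta0 + (1 - d) * R a Theta1) ` A"
    unfolding Gval_def using fA by (intro Max_in) auto
  thus ?thesis using each by auto
qed

lemma Mb_nn: "0 \<le> Mb" unfolding Mb_def by (auto intro: sum_nonneg)

end

context mdl begin

lemma mV_bound:
  assumes c: "vp Es c" and s: "\<And>d. d \<in> {0..1} \<Longrightarrow> 0 \<le> s d \<and> s d \<le> 1" and b: "0 \<le> b" "b \<le> 1"
    and d0: "d \<in> {0..1}"
  shows "\<bar>mV b Es X Q (Gval A R) s c n d\<bar> \<le> Mb"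
  using d0
proof (induction n arbitrary: d)
  case 0
  have "\<bar>s d * Gval A R d\<bar> \<le> 1 * Mb"
    unfolding abs_mult using G_bound[OF 0] s[OF 0] by (intro mult_mono) auto
  then show ?case by simp
next
  case (Suc n)
  have av: "\<bar>avgE Es X Q c (mV b Es X Q (Gval A R) s c n) d\<bar> \<le> Mb"
    by (rule avg_bound[OF c Suc.prems]) (use Suc.IH in auto)
  have sd: "0 \<le> s d" "s d \<le> 1" using s Suc.prems by auto
  have "\<bar>mV b Es X Q (Gval A R) s c (Suc n) d\<bar> \<le> s d * \<bar>Gval A R d\<bar> + (1 - s d) * b * \<bar>avgE Es X Q c (mV b Es X Q (Gval A R) s c n) d\<bar>"
    unfolding mV_Suc using sd b by (auto simp: abs_mult intro!: order.trans[OF abs_triangle_ineq])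
  also have "\<dots> \<le> s d * Mb + (1 - s d) * 1 * Mb"
    using sd b G_bound[OF Suc.prems] av
    by (intro add_mono mult_left_mono mult_mono) auto
  also have "\<dots> = Mb" by (simp add: algebra_simps)
  finally show ?case .
qed

lemma mV_step:
  assumes c: "vp Es c" and s: "\<And>d. d \<in> {0..1} \<Longrightarrow> 0 \<le> s d \<and> s d \<le> 1" and b: "0 \<le> b" "b \<le> 1"
    and d0: "d \<in> {0..1}"
  shows "\<bar>mV b Es X Q (Gval A R) s c (Suc n) d - mV b Es X Q (Gval A R) s c n d\<bar> \<le> Mb * b ^ Suc n"
  using d0
proof (induction n arbitrary: d)
  case 0
  have sd: "0 \<le> s d" "s d \<le> 1" using s 0 by auto
  have av: "\<bar>avgE Es X Q c (mV b Es X Q (Gval A R) s c 0) d\<bar> \<le> Mb"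
    by (rule avg_bound[OF c 0], rule mV_bound[where s=s and c=c and b=b, OF c s b])
  have "\<bar>(1 - s d) * b * avgE Es X Q c (mV b Es X Q (Gval A R) s c 0) d\<bar> \<le> 1 * b * Mb"
    unfolding abs_mult using sd b av by (intro mult_mono) auto
  then show ?case by (simp add: mV_Suc[of _ _ _ _ _ _ _ 0] mult_ac)
next
  case (Suc n)
  have sd: "0 \<le> s d" "s d \<le> 1" using s Suc.prems by auto
  have av: "\<bar>avgE Es X Q c (\<lambda>y. mV b Es X Q (Gval A R) s c (Suc n) y - mV b Es X Q (Gval A R) s c n y) d\<bar> \<le> Mb * b ^ Suc n"
    by (rule avg_bound[OF c Suc.prems]) (use Suc.IH in auto)
  have e: "mV b Es X Q (Gval A R) s c (Suc (Suc n)) d - mV b Es X Q (Gval A R) s c (Suc n) d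
     = (1 - s d) * b * avgE Es X Q c (\<lambda>y. mV b Es X Q (Gval A R) s c (Suc n) y - mV b Es X Q (Gval A R) s c n y) d"
  proof -
    let ?V = "mV b Es X Q (Gval A R) s c"
    have e1: "?V (Suc (Suc n)) d = s d * Gval A R d + (1 - s d) * b * avgE Es X Q c (?V (Suc n)) d" by (rule mV_Suc)
    have e2: "?V (Suc n) d = s d * Gval A R d + (1 - s d) * b * avgE Es X Q c (?V n) d" by (rule mV_Suc)
    show ?thesis unfolding e1 e2 avg_diff[symmetric] by (simp add: right_diff_distrib)
  qed
  have "\<bar>(1 - s d) * b * avgE Es X Q c (\<lambda>y. mV b Es X Q (Gval A R) s c (Suc n) y - mV b Es X Q (Gval A R) s c n y) d\<bar> \<le> 1 * b * (Mb * b ^ Suc n)"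
    unfolding abs_mult using sd b av by (intro mult_mono) auto
  then show ?case unfolding e by (simp add: mult_ac)
qed

lemma mV_conv:
  assumes c: "vp Es c" and s: "\<And>d. d \<in> {0..1} \<Longrightarrow> 0 \<le> s d \<and> s d \<le> 1" and b: "0 \<le> b" "b < 1"
    and d: "d \<in> {0..1}"
  shows "convergent (\<lambda>n. mV b Es X Q (Gval A R) s c n d)"
    "\<bar>lim (\<lambda>n. mV b Es X Q (Gval A R) s c n d) - mV b Es X Q (Gval A R) s c N d\<bar> \<le> Mb * b * b ^ N / (1 - b)"
proof -
  have st: "\<And>n. \<bar>mV b Es X Q (Gval A R) s c (Suc n) d - mV b Es X Q (Gval A R) s c n d\<bar> \<le> (Mb * b) * b ^ n"
    using mV_step[where s=s and c=c and b=b, OF c s b(1) _ d] b by (simp add: mult_ac)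
  show "convergent (\<lambda>n. mV b Es X Q (Gval A R) s c n d)"
    by (rule geom_conv(1)[OF st b])
  show "\<bar>lim (\<lambda>n. mV b Es X Q (Gval A R) s c n d) - mV b Es X Q (Gval A R) s c N d\<bar> \<le> Mb * b * b ^ N / (1 - b)"
    by (rule geom_conv(2)[OF st b])
qed

lemma mV_cong:
  assumes "\<And>d E. d \<in> {0..1} \<Longrightarrow> E \<in> Es \<Longrightarrow> c d E = c' d E"
    and d0: "d \<in> {0..1}"
  shows "mV b Es X Q g s c n d = mV b Es X Q g s c' n d"
  using d0
proof (induction n arbitrary: d)
  case 0 then show ?case by simp
next
  case (Suc n)
  show ?case unfolding mV_Suc avgE_def
    using assms Suc upd_range by (auto intro!: sum.cong)
qed

definition err :: "(real \<Rightarrow> 'e \<Rightarrow> real) \<Rightarrow> (real \<Rightarrow> 'e \<Rightarrow> real) \<Rightarrow> real \<Rightarrow> real" where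
  "err c1 c2 d = (\<Sum>E\<in>Es. \<bar>c1 d E - c2 d E\<bar>)"

lemma mV_diff:
  assumes c1: "vp Es c1" and c2: "vp Es c2" and s: "\<And>d. d \<in> {0..1} \<Longrightarrow> 0 \<le> s d \<and> s d \<le> 1"
    and b: "0 \<le> b" "b \<le> 1" and d: "d \<in> {0..1}"
  shows "\<bar>mV b Es X Q (Gval A R) s c1 (Suc n) d - mV b Es X Q (Gval A R) s c2 (Suc n) d\<bar>
     \<le> Mb * err c1 c2 d + Tf Es X Q (\<lambda>y. \<bar>mV b Es X Q (Gval A R) s c1 n y - mV b Es X Q (Gval A R) s c2 n y\<bar>) d"
proof -
  let ?V1 = "mV b Es X Q (Gval A R) s c1 n" and ?V2 = "mV b Es X Q (Gval A R) s c2 n"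
  define W1 where "W1 E = (\<Sum>x\<in>X E. pout Q x E d * ?V1 (upd Q x E d))" for E
  define W2 where "W2 E = (\<Sum>x\<in>X E. pout Q x E d * ?V2 (upd Q x E d))" for E
  have sd: "0 \<le> s d" "s d \<le> 1" using s d by auto
  have W1b: "\<bar>W1 E\<bar> \<le> Mb" if E: "E \<in> Es" for E
  proof -
    have "\<bar>W1 E\<bar> \<le> (\<Sum>x\<in>X E. \<bar>pout Q x E d * ?V1 (upd Q x E d)\<bar>)" unfolding W1_def by (rule sum_abs)
    also have "\<dots> \<le> (\<Sum>x\<in>X E. pout Q x E d * Mb)"
    proof (rule sum_mono)
      fix x assume x: "x \<in> X E"
      have "\<bar>?V1 (upd Q x E d)\<bar> \<le> Mb"
        by (rule mV_bound[OF c1 s b upd_range[OF E x d]])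
      thus "\<bar>pout Q x E d * ?V1 (upd Q x E d)\<bar> \<le> pout Q x E d * Mb"
        using pout_nn[OF E x d] by (simp add: abs_mult mult_left_mono)
    qed
    also have "\<dots> = Mb" using sum_pout[OF E] by (simp add: sum_distrib_right[symmetric])
    finally show ?thesis .
  qed
  have W12: "\<bar>W1 E - W2 E\<bar> \<le> (\<Sum>x\<in>X E. pout Q x E d * \<bar>?V1 (upd Q x E d) - ?V2 (upd Q x E d)\<bar>)" if E: "E \<in> Es" for E
  proof -
    have eq: "W1 E - W2 E = (\<Sum>x\<in>X E. pout Q x E d * (?V1 (upd Q x E d) - ?V2 (upd Q x E d)))"
      unfolding W1_def W2_def right_diff_distrib by (rule sum_subtractf[symmetric])
    have "\<bar>W1 E - W2 E\<bar> \<le> (\<Sum>x\<in>X E. \<bar>pout Q x E d * (?V1 (upd Q x E d) - ?V2 (upd Q x E d))\<bar>)"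
      unfolding eq by (rule sum_abs)
    also have "\<dots> = (\<Sum>x\<in>X E. pout Q x E d * \<bar>?V1 (upd Q x E d) - ?V2 (upd Q x E d)\<bar>)"
    proof (rule sum.cong[OF refl])
      fix x assume x: "x \<in> X E"
      have "0 \<le> pout Q x E d" by (rule pout_nn[OF E x d])
      thus "\<bar>pout Q x E d * (?V1 (upd Q x E d) - ?V2 (upd Q x E d))\<bar> = pout Q x E d * \<bar>?V1 (upd Q x E d) - ?V2 (upd Q x E d)\<bar>"
        by (simp only: abs_mult abs_of_nonneg)
    qed
    finally show ?thesis .
  qed
  have key: "(\<Sum>E\<in>Es. c1 d E * W1 E) - (\<Sum>E\<in>Es. c2 d E * W2 E)
     = (\<Sum>E\<in>Es. (c1 d E - c2 d E) * W1 E) + (\<Sum>E\<in>Es. c2 d E * (W1 E - W2 E))"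
  proof -
    have "(\<Sum>E\<in>Es. (c1 d E - c2 d E) * W1 E) + (\<Sum>E\<in>Es. c2 d E * (W1 E - W2 E))
        = (\<Sum>E\<in>Es. (c1 d E - c2 d E) * W1 E + c2 d E * (W1 E - W2 E))"
      by (rule sum.distrib[symmetric])
    also have "\<dots> = (\<Sum>E\<in>Es. c1 d E * W1 E - c2 d E * W2 E)"
      by (rule sum.cong[OF refl]) (simp add: algebra_simps)
    also have "\<dots> = (\<Sum>E\<in>Es. c1 d E * W1 E) - (\<Sum>E\<in>Es. c2 d E * W2 E)"
      by (rule sum_subtractf)
    finally show ?thesis by simp
  qed
  have t1: "\<bar>\<Sum>E\<in>Es. (c1 d E - c2 d E) * W1 E\<bar> \<le> Mb * err c1 c2 d"
  proof -
    have "\<bar>\<Sum>E\<in>Es. (c1 d E - c2 d E) * W1 E\<bar> \<le> (\<Sum>E\<in>Es. \<bar>(c1 d E - c2 d E) * W1 E\<bar>)" by (rule sum_abs)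
    also have "\<dots> \<le> (\<Sum>E\<in>Es. \<bar>c1 d E - c2 d E\<bar> * Mb)"
      by (rule sum_mono) (simp add: abs_mult mult_left_mono W1b)
    also have "\<dots> = Mb * err c1 c2 d" by (simp add: err_def sum_distrib_left mult.commute)
    finally show ?thesis .
  qed
  have t2: "\<bar>\<Sum>E\<in>Es. c2 d E * (W1 E - W2 E)\<bar> \<le> Tf Es X Q (\<lambda>y. \<bar>?V1 y - ?V2 y\<bar>) d"
  proof -
    have "\<bar>\<Sum>E\<in>Es. c2 d E * (W1 E - W2 E)\<bar> \<le> (\<Sum>E\<in>Es. \<bar>c2 d E * (W1 E - W2 E)\<bar>)" by (rule sum_abs)
    also have "\<dots> \<le> (\<Sum>E\<in>Es. 1 * (\<Sum>x\<in>X E. pout Q x E d * \<bar>?V1 (upd Q x E d) - ?V2 (upd Q x E d)\<bar>))"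
    proof (rule sum_mono)
      fix E assume E: "E \<in> Es"
      have "0 \<le> c2 d E" "c2 d E \<le> 1" using c2 d E vp_le1[OF c2 finEs d E] by (auto simp: vp_def)
      thus "\<bar>c2 d E * (W1 E - W2 E)\<bar> \<le> 1 * (\<Sum>x\<in>X E. pout Q x E d * \<bar>?V1 (upd Q x E d) - ?V2 (upd Q x E d)\<bar>)"
        unfolding abs_mult using W12[OF E] by (intro mult_mono) auto
    qed
    also have "\<dots> = Tf Es X Q (\<lambda>y. \<bar>?V1 y - ?V2 y\<bar>) d" by (simp add: Tf_def)
    finally show ?thesis .
  qed
  have feq: "mV b Es X Q (Gval A R) s c1 (Suc n) d - mV b Es X Q (Gval A R) s c2 (Suc n) d
     = (1 - s d) * b * ((\<Sum>E\<in>Es. c1 d E * W1 E) - (\<Sum>E\<in>Es. c2 d E * W2 E))"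
  proof -
    have "\<And>c. mV b Es X Q (Gval A R) s c (Suc n) d = s d * Gval A R d + (1 - s d) * b *
     (\<Sum>E\<in>Es. c d E * (\<Sum>x\<in>X E. pout Q x E d * mV b Es X Q (Gval A R) s c n (upd Q x E d)))"
      by (rule mV.simps(2))
    thus ?thesis unfolding W1_def W2_def by (simp add: right_diff_distrib)
  qed
  have "\<bar>mV b Es X Q (Gval A R) s c1 (Suc n) d - mV b Es X Q (Gval A R) s c2 (Suc n) d\<bar> \<le> 1 * 1 * (Mb * err c1 c2 d + Tf Es X Q (\<lambda>y. \<bar>?V1 y - ?V2 y\<bar>) d)"
    unfolding feq abs_mult key using sd b t1 t2
    by (intro mult_mono order.trans[OF abs_triangle_ineq] add_mono) auto
  thus ?thesis by simp
qed

end

lemma subst_bound: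
  fixes \<alpha> \<beta> :: real and f :: "real \<Rightarrow> real"
  assumes ab: "0 < \<alpha>" "0 < \<beta>" and fm: "f \<in> borel_measurable borel" and fnn: "\<And>y. 0 \<le> f y"
  shows "(\<integral>\<^sup>+d. ennreal (indicator {0..1} d * ((d * \<alpha> + (1 - d) * \<beta>) * f (d * \<alpha> / (d * \<alpha> + (1 - d) * \<beta>)))) \<partial>lborel)
     \<le> ennreal (\<alpha>^2 * \<beta>^2 / (min \<alpha> \<beta>)^3) * (\<integral>\<^sup>+d. ennreal (indicator {0..1} d * f d) \<partial>lborel)"
proof -
  define P where "P d = d * \<alpha> + (1 - d) * \<beta>" for d
  define F where "F d = P d * f (d * \<alpha> / P d)" for d
  define D where "D y = y * \<beta> + (1 - y) * \<alpha>" for y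
  define g where "g y = y * \<beta> / D y" for y
  define g' where "g' y = \<alpha> * \<beta> / (D y)^2" for y
  define C where "C = \<alpha>^2 * \<beta>^2 / (min \<alpha> \<beta>)^3"
  have Dpos: "D y \<ge> min \<alpha> \<beta>" if "y \<in> {0..1}" for y
  proof -
    have "D y \<ge> y * min \<alpha> \<beta> + (1 - y) * min \<alpha> \<beta>"
      unfolding D_def using that by (intro add_mono mult_left_mono) auto
    thus ?thesis by (simp add: algebra_simps)
  qed
  have mpos: "min \<alpha> \<beta> > 0" using ab by auto
  have Dne: "D y \<noteq> 0" if "y \<in> {0..1}" for y using Dpos[OF that] mpos by auto
  have Fm: "F \<in> borel_measurable borel" unfolding F_def P_def using fm by measurable
  have g0: "g 0 = 0" and g1: "g 1 = 1" using ab by (auto simp: g_def D_def)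
  have derivg: "(g has_real_derivative g' x) (at x)" if x: "x \<in> {0..1}" for x
  proof -
    have "((\<lambda>y. y * \<beta> / D y) has_real_derivative ((1 * \<beta>) * D x - x * \<beta> * (1 * \<beta> + (0 * (1 - x) + (0 - 1) * \<alpha>))) / (D x * D x)) (at x)"
      unfolding D_def using Dne[OF x] unfolding D_def
      by (intro derivative_eq_intros refl) auto
    moreover have "((1 * \<beta>) * D x - x * \<beta> * (1 * \<beta> + (0 * (1 - x) + (0 - 1) * \<alpha>))) / (D x * D x) = g' x"
      unfolding g'_def D_def by (simp add: power2_eq_square algebra_simps)
    ultimately show ?thesis unfolding g_def by simp
  qed
  have contg': "continuous_on {0..1} g'"
    unfolding g'_def using Dne unfolding D_def by (intro continuous_intros) auto
  have g'nn: "g' x \<ge> 0" if "x \<in> {0..1}" for x using ab by (auto simp: g'_def)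
  have sub: "(\<integral>\<^sup>+x. F x * indicator {g 0..g 1} x \<partial>lborel) =
             (\<integral>\<^sup>+x. F (g x) * g' x * indicator {0..1} x \<partial>lborel)"
    by (rule nn_integral_substitution[OF _ derivg contg' g'nn])
       (use Fm in \<open>auto simp: set_borel_measurable_def intro!: borel_measurable_scaleR borel_measurable_indicator\<close>)
  have pt: "F (g x) * g' x = f x * (\<alpha>^2 * \<beta>^2 / (D x)^3)" if x: "x \<in> {0..1}" for x
  proof -
    have Dx: "D x > 0" using Dpos[OF x] mpos by auto
    have Pg: "P (g x) = \<alpha> * \<beta> / D x"
    proof -
      have "1 - g x = (1 - x) * \<alpha> / D x" unfolding g_def using Dx by (simp add: field_simps D_def)
      hence "P (g x) = x * \<beta> / D x * \<alpha> + (1 - x) * \<alpha> / D x * \<beta>" unfolding P_def by (simp add: g_def)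
      also have "\<dots> = \<alpha> * \<beta> * (x + (1 - x)) / D x" by (simp add: add_divide_distrib[symmetric] algebra_simps)
      finally show ?thesis by simp
    qed
    have Ug: "g x * \<alpha> / P (g x) = x"
      unfolding Pg unfolding g_def using Dx ab by (simp add: field_simps)
    have "F (g x) = P (g x) * f x" unfolding F_def Ug ..
    thus ?thesis unfolding Pg g'_def using Dx by (simp add: field_simps power2_eq_square power3_eq_cube)
  qed
  have le: "F (g x) * g' x * indicator {0..1} x \<le> C * (indicator {0..1} x * f x)" for x
  proof (cases "x \<in> {0..1}")
    case True
    have "\<alpha>^2 * \<beta>^2 / (D x)^3 \<le> C" unfolding C_def
      using Dpos[OF True] mpos by (intro divide_left_mono power_mono mult_pos_pos) auto
    hence "f x * (\<alpha>^2 * \<beta>^2 / (D x)^3) \<le> f x * C" using fnn[of x] by (rule mult_left_mono)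
    then show ?thesis using True pt[OF True] by (simp add: mult.commute)
  qed simp
  have "(\<integral>\<^sup>+d. ennreal (indicator {0..1} d * (P d * f (d * \<alpha> / P d))) \<partial>lborel)
      = (\<integral>\<^sup>+x. F x * indicator {g 0..g 1} x \<partial>lborel)"
    unfolding g0 g1 F_def by (intro nn_integral_cong) (simp add: mult.commute)
  also have "\<dots> = (\<integral>\<^sup>+x. F (g x) * g' x * indicator {0..1} x \<partial>lborel)" by (rule sub)
  also have "\<dots> \<le> (\<integral>\<^sup>+x. ennreal C * ennreal (indicator {0..1} x * f x) \<partial>lborel)"
  proof (rule nn_integral_mono)
    fix x
    have "0 \<le> C" unfolding C_def using mpos by auto
    thus "ennreal (F (g x) * g' x * indicator {0..1} x) \<le> ennreal C * ennreal (indicator {0..1} x * f x)"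
      using le[of x] by (simp add: ennreal_mult'[symmetric] ennreal_leI)
  qed
  also have "\<dots> = ennreal C * (\<integral>\<^sup>+x. ennreal (indicator {0..1} x * f x) \<partial>lborel)"
    by (rule nn_integral_cmult) (use fm in measurable)
  finally show ?thesis unfolding C_def P_def .
qed

definition cc :: "real \<Rightarrow> real \<Rightarrow> real" where
  "cc \<alpha> \<beta> = (if 0 < \<alpha> \<and> 0 < \<beta> then \<alpha>^2 * \<beta>^2 / (min \<alpha> \<beta>)^3 else 0)"

lemma cc_nn: "0 \<le> cc \<alpha> \<beta>" by (auto simp: cc_def)

lemma nn_sum_bound:
  fixes h :: "'i \<Rightarrow> real \<Rightarrow> real"
  assumes fin: "finite S"
    and m: "\<And>i. i \<in> S \<Longrightarrow> h i \<in> borel_measurable borel"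
    and nn: "\<And>i d. i \<in> S \<Longrightarrow> 0 \<le> indicator {0..1} d * h i d"
    and b: "\<And>i. i \<in> S \<Longrightarrow> (\<integral>\<^sup>+d. ennreal (indicator {0..1} d * h i d) \<partial>lborel) \<le> ennreal (c i) * J"
    and c: "\<And>i. i \<in> S \<Longrightarrow> 0 \<le> c i"
  shows "(\<integral>\<^sup>+d. ennreal (indicator {0..1} d * (\<Sum>i\<in>S. h i d)) \<partial>lborel) \<le> ennreal (\<Sum>i\<in>S. c i) * J"
proof -
  have "(\<integral>\<^sup>+d. ennreal (indicator {0..1} d * (\<Sum>i\<in>S. h i d)) \<partial>lborel)
      = (\<integral>\<^sup>+d. (\<Sum>i\<in>S. ennreal (indicator {0..1} d * h i d)) \<partial>lborel)"
    by (intro nn_integral_cong) (simp add: sum_distrib_left nn)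
  also have "\<dots> = (\<Sum>i\<in>S. \<integral>\<^sup>+d. ennreal (indicator {0..1} d * h i d) \<partial>lborel)"
    by (rule nn_integral_sum) (use m in measurable)
  also have "\<dots> \<le> (\<Sum>i\<in>S. ennreal (c i) * J)" by (rule sum_mono) (rule b)
  also have "\<dots> = ennreal (\<Sum>i\<in>S. c i) * J" by (simp add: sum_distrib_right[symmetric] c)
  finally show ?thesis .
qed

context mdl begin

lemma upd_meas[measurable]: "(\<lambda>d. upd Q x E d) \<in> borel_measurable borel"
  unfolding upd_def pout_def by measurable

lemma pout_meas[measurable]: "(\<lambda>d. pout Q x E d) \<in> borel_measurable borel"
  unfolding pout_def by measurable

lemma Tf_meas:
  assumes [measurable]: "f \<in> borel_measurable borel"
  shows "Tf Es X Q f \<in> borel_measurable borel"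
  unfolding Tf_def by measurable

lemma Tf_01:
  assumes "f 0 = 0" "f 1 = 0"
  shows "Tf Es X Q f 0 = 0" "Tf Es X Q f 1 = 0"
proof -
  show "Tf Es X Q f 0 = 0" unfolding Tf_def by (simp add: upd0 assms)
  have "pout Q x E 1 * f (upd Q x E 1) = 0" for x E
    using upd1[of x E] pout_upd1[of x E] assms by auto
  thus "Tf Es X Q f 1 = 0" unfolding Tf_def by (intro sum.neutral ballI) simp
qed

lemma term_bound:
  assumes E: "E \<in> Es" and x: "x \<in> X E" and fm: "f \<in> borel_measurable borel" and fnn: "\<And>y. 0 \<le> f y"
    and f0: "f 0 = 0" and f1: "f 1 = 0"
  shows "(\<integral>\<^sup>+d. ennreal (indicator {0..1} d * (pout Q x E d * f (upd Q x E d))) \<partial>lborel)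
     \<le> ennreal (cc (Q x E Theta0) (Q x E Theta1)) * (\<integral>\<^sup>+d. ennreal (indicator {0..1} d * f d) \<partial>lborel)"
proof (cases "0 < Q x E Theta0 \<and> 0 < Q x E Theta1")
  case True
  then show ?thesis using subst_bound[OF _ _ fm fnn, of "Q x E Theta0" "Q x E Theta1"]
    by (simp add: cc_def pout_def upd_def)
next
  case False
  have q: "0 \<le> Q x E Theta0" "0 \<le> Q x E Theta1" using Qnn[OF E x] by auto
  have "f (upd Q x E d) = 0" for d
  proof -
    have "upd Q x E d = 0 \<or> upd Q x E d = 1"
    proof (cases "Q x E Theta0 = 0")
      case True then show ?thesis by (simp add: upd_def)
    next
      case False
      with q \<open>\<not> (0 < Q x E Theta0 \<and> 0 < Q x E Theta1)\<close> have "Q x E Theta1 = 0" by auto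
      then show ?thesis by (simp add: upd_def pout_def)
    qed
    thus ?thesis using f0 f1 by auto
  qed
  then show ?thesis by simp
qed

definition Ct where "Ct = (\<Sum>E\<in>Es. \<Sum>x\<in>X E. cc (Q x E Theta0) (Q x E Theta1))"

lemma Ct_nn: "0 \<le> Ct" unfolding Ct_def by (intro sum_nonneg cc_nn)

lemma T_bound:
  assumes fm: "f \<in> borel_measurable borel" and fnn: "\<And>y. 0 \<le> f y"
    and f0: "f 0 = 0" and f1: "f 1 = 0"
  shows "(\<integral>\<^sup>+d. ennreal (indicator {0..1} d * Tf Es X Q f d) \<partial>lborel)
     \<le> ennreal Ct * (\<integral>\<^sup>+d. ennreal (indicator {0..1} d * f d) \<partial>lborel)"
  unfolding Tf_def Ct_def
proof (rule nn_sum_bound[OF finEs])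
  fix E assume E: "E \<in> Es"
  show "(\<lambda>d. \<Sum>x\<in>X E. pout Q x E d * f (upd Q x E d)) \<in> borel_measurable borel"
    using fm by measurable
  show "0 \<le> indicator {0..1} d * (\<Sum>x\<in>X E. pout Q x E d * f (upd Q x E d))" for d
    using pout_nn[OF E] fnn by (auto simp: indicator_def intro!: sum_nonneg)
  show "0 \<le> (\<Sum>x\<in>X E. cc (Q x E Theta0) (Q x E Theta1))" by (intro sum_nonneg cc_nn)
  show "(\<integral>\<^sup>+d. ennreal (indicator {0..1} d * (\<Sum>x\<in>X E. pout Q x E d * f (upd Q x E d))) \<partial>lborel)
      \<le> ennreal (\<Sum>x\<in>X E. cc (Q x E Theta0) (Q x E Theta1)) * (\<integral>\<^sup>+d. ennreal (indicator {0..1} d * f d) \<partial>lborel)"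
  proof (rule nn_sum_bound[OF finX[OF E]])
    fix x assume x: "x \<in> X E"
    show "(\<lambda>d. pout Q x E d * f (upd Q x E d)) \<in> borel_measurable borel" using fm by measurable
    show "0 \<le> indicator {0..1} d * (pout Q x E d * f (upd Q x E d))" for d
      using pout_nn[OF E x] fnn by (auto simp: indicator_def)
    show "0 \<le> cc (Q x E Theta0) (Q x E Theta1)" by (rule cc_nn)
    show "(\<integral>\<^sup>+d. ennreal (indicator {0..1} d * (pout Q x E d * f (upd Q x E d))) \<partial>lborel)
      \<le> ennreal (cc (Q x E Theta0) (Q x E Theta1)) * (\<integral>\<^sup>+d. ennreal (indicator {0..1} d * f d) \<partial>lborel)"
      by (rule term_bound[OF E x fm fnn f0 f1])
  qed
qed

end

context mdl begin

lemma G_meas[measurable]: "Gval A R \<in> borel_measurable borel"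
proof -
  have fA: "finite A" using mok by (auto simp: model_ok_def)
  show ?thesis unfolding Gval_def
    by (rule borel_measurable_Max[OF fA]) measurable
qed

lemma mV_meas:
  assumes [measurable]: "s \<in> borel_measurable borel" and cm[measurable]: "\<And>E. (\<lambda>d. c d E) \<in> borel_measurable borel"
  shows "mV b Es X Q (Gval A R) s c n \<in> borel_measurable borel"
proof (induction n)
  case 0 then show ?case by simp
next
  case (Suc n)
  note [measurable] = Suc.IH
  show ?case unfolding mV.simps(2)[abs_def] by measurable
qed

lemma err_meas:
  assumes [measurable]: "\<And>E. (\<lambda>d. c1 d E) \<in> borel_measurable borel" "\<And>E. (\<lambda>d. c2 d E) \<in> borel_measurable borel"
  shows "err c1 c2 \<in> borel_measurable borel"
  unfolding err_def[abs_def] by measurable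

lemma err_nn: "0 \<le> err c1 c2 d" unfolding err_def by (auto intro: sum_nonneg)

lemma D_bound:
  assumes c1: "vp Es c1" and c2: "vp Es c2" and s: "\<And>d. d \<in> {0..1} \<Longrightarrow> 0 \<le> s d \<and> s d \<le> 1"
    and b: "0 \<le> b" "b \<le> 1"
    and sm[measurable]: "s \<in> borel_measurable borel"
    and c1m[measurable]: "\<And>E. (\<lambda>d. c1 d E) \<in> borel_measurable borel"
    and c2m[measurable]: "\<And>E. (\<lambda>d. c2 d E) \<in> borel_measurable borel"
    and e0: "err c1 c2 0 = 0" and e1: "err c1 c2 1 = 0"
  defines "Dn \<equiv> \<lambda>n y. \<bar>mV b Es X Q (Gval A R) s c1 n y - mV b Es X Q (Gval A R) s c2 n y\<bar>"
  shows "Dn n 0 = 0 \<and> Dn n 1 = 0 \<and>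
    (\<integral>\<^sup>+d. ennreal (indicator {0..1} d * Dn n d) \<partial>lborel)
      \<le> ennreal Mb * (\<integral>\<^sup>+d. ennreal (indicator {0..1} d * err c1 c2 d) \<partial>lborel) * (\<Sum>k<n. ennreal Ct ^ k)"
proof (induction n)
  case 0
  then show ?case by (simp add: Dn_def)
next
  case (Suc n)
  let ?e = "(\<integral>\<^sup>+d. ennreal (indicator {0..1} d * err c1 c2 d) \<partial>lborel)"
  have IH0: "Dn n 0 = 0" and IH1: "Dn n 1 = 0" using Suc.IH by auto
  have Dm[measurable]: "Dn k \<in> borel_measurable borel" for k
  proof -
    note [measurable] = mV_meas[OF sm c1m] mV_meas[OF sm c2m]
    show ?thesis unfolding Dn_def by measurable
  qed
  have step: "Dn (Suc n) d \<le> Mb * err c1 c2 d + Tf Es X Q (Dn n) d" if d: "d \<in> {0..1}" for d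
    unfolding Dn_def by (rule mV_diff[OF c1 c2 s b d])
  have T0: "Tf Es X Q (Dn n) 0 = 0" "Tf Es X Q (Dn n) 1 = 0" using Tf_01[OF IH0 IH1] by auto
  have Dnn: "0 \<le> Dn k y" for k y by (simp add: Dn_def)
  have z0: "Dn (Suc n) 0 = 0" using step[of 0] e0 T0 Dnn[of "Suc n" 0] by simp
  have z1: "Dn (Suc n) 1 = 0" using step[of 1] e1 T0 Dnn[of "Suc n" 1] by simp
  have Tnn: "0 \<le> Tf Es X Q (Dn n) d" if "d \<in> {0..1}" for d
    unfolding Tf_def
  proof (intro sum_nonneg)
    fix E x assume "E \<in> Es" "x \<in> X E"
    show "0 \<le> pout Q x E d * Dn n (upd Q x E d)"
      by (rule mult_nonneg_nonneg[OF pout_nn[OF \<open>E \<in> Es\<close> \<open>x \<in> X E\<close> that] Dnn])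
  qed
  have "(\<integral>\<^sup>+d. ennreal (indicator {0..1} d * Dn (Suc n) d) \<partial>lborel)
      \<le> (\<integral>\<^sup>+d. ennreal Mb * ennreal (indicator {0..1} d * err c1 c2 d) + ennreal (indicator {0..1} d * Tf Es X Q (Dn n) d) \<partial>lborel)"
  proof (rule nn_integral_mono)
    fix d
    show "ennreal (indicator {0..1} d * Dn (Suc n) d)
       \<le> ennreal Mb * ennreal (indicator {0..1} d * err c1 c2 d) + ennreal (indicator {0..1} d * Tf Es X Q (Dn n) d)"
    proof (cases "d \<in> {0..1}")
      case True
      have "ennreal (Dn (Suc n) d) \<le> ennreal (Mb * err c1 c2 d + Tf Es X Q (Dn n) d)"
        using step[OF True] by (rule ennreal_leI)
      also have "\<dots> = ennreal Mb * ennreal (err c1 c2 d) + ennreal (Tf Es X Q (Dn n) d)"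
        using Mb_nn err_nn[of c1 c2 d] Tnn[OF True]
        by (simp only: ennreal_plus[OF mult_nonneg_nonneg[OF Mb_nn err_nn] Tnn[OF True]] ennreal_mult[OF Mb_nn err_nn])
      finally show ?thesis using True by simp
    qed simp
  qed
  also have "\<dots> = ennreal Mb * ?e + (\<integral>\<^sup>+d. ennreal (indicator {0..1} d * Tf Es X Q (Dn n) d) \<partial>lborel)"
  proof -
    note [measurable] = Tf_meas[OF Dm[of n]] err_meas[OF c1m c2m]
    have m1: "(\<lambda>d. ennreal Mb * ennreal (indicator {0..1} d * err c1 c2 d)) \<in> borel_measurable lborel" by measurable
    have m2: "(\<lambda>d. ennreal (indicator {0..1} d * Tf Es X Q (Dn n) d)) \<in> borel_measurable lborel" by measurable
    have m3: "(\<lambda>d. ennreal (indicator {0..1} d * err c1 c2 d)) \<in> borel_measurable lborel" by measurable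
    show ?thesis using nn_integral_add[OF m1 m2] nn_integral_cmult[OF m3] by simp
  qed
  also have "\<dots> \<le> ennreal Mb * ?e + ennreal Ct * (\<integral>\<^sup>+d. ennreal (indicator {0..1} d * Dn n d) \<partial>lborel)"
    by (rule add_left_mono, rule T_bound[OF Dm[of n] Dnn[of n] IH0 IH1])
  also have "\<dots> \<le> ennreal Mb * ?e + ennreal Ct * (ennreal Mb * ?e * (\<Sum>k<n. ennreal Ct ^ k))"
  proof -
    have IHI: "(\<integral>\<^sup>+d. ennreal (indicator {0..1} d * Dn n d) \<partial>lborel) \<le> ennreal Mb * ?e * (\<Sum>k<n. ennreal Ct ^ k)"
      using Suc.IH by blast
    show ?thesis by (rule add_left_mono, rule mult_left_mono[OF IHI], simp)
  qed
  also have "\<dots> = ennreal Mb * ?e * (\<Sum>k<Suc n. ennreal Ct ^ k)"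
  proof -
    have "(\<Sum>k<Suc n. ennreal Ct ^ k) = 1 + ennreal Ct * (\<Sum>k<n. ennreal Ct ^ k)"
      unfolding sum.lessThan_Suc_shift sum_distrib_left by simp
    thus ?thesis by (simp only: distrib_left mult_1_right mult.assoc mult.left_commute)
  qed
  finally have "(\<integral>\<^sup>+d. ennreal (indicator {0..1} d * Dn (Suc n) d) \<partial>lborel)
      \<le> ennreal Mb * ?e * (\<Sum>k<Suc n. ennreal Ct ^ k)" .
  thus ?case using z0 z1 by blast
qed

end

lemma lebesgue_borel_emeasure: "S \<in> sets borel \<Longrightarrow> emeasure (lebesgue :: real measure) S = emeasure lborel S"
  by (simp add: main_part_sets)

lemma borel_lebesgue_sets: "S \<in> sets borel \<Longrightarrow> S \<in> sets (lebesgue :: real measure)"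
  by (rule sets_completionI_sets) simp

context mdl begin

lemma cont_approx:
  fixes p :: "real \<Rightarrow> 'e" and \<eta> :: real and E0 :: 'e
  assumes E0: "E0 \<in> Es" and pE: "\<And>d. d \<in> {0..1} \<Longrightarrow> p d \<in> Es"
    and Sb: "\<And>E. {d \<in> {0..1}. p d = E} \<in> sets borel" and eta: "0 < \<eta>"
  defines "c1 \<equiv> \<lambda>d E. if E = p d then 1 else (0::real)"
  shows "\<exists>c2. vp Es c2 \<and> (\<forall>E. continuous_on UNIV (\<lambda>d. c2 d E)) \<and>
     err c1 c2 0 = 0 \<and> err c1 c2 1 = 0 \<and>
     (\<integral>\<^sup>+d. ennreal (indicator {0..1} d * err c1 c2 d) \<partial>lborel) \<le> ennreal \<eta>"
proof -
  define S where "S E = {d \<in> {0..1}. p d = E}" for E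
  define N where "N = real (card Es)"
  have cardpos: "card Es > 0" using E0 finEs by (auto simp: card_gt_0_iff)
  hence Npos: "N > 0" by (simp add: N_def)
  define \<eta>' where "\<eta>' = \<eta> / (N * N)"
  have eta': "\<eta>' > 0" using eta Npos by (simp add: \<eta>'_def)
  have "\<forall>E\<in>Es. \<exists>T. closed T \<and> T \<subseteq> S E \<and> emeasure lborel (S E - T) < ennreal \<eta>'"
  proof
    fix E assume "E \<in> Es"
    have "S E \<in> sets lebesgue" using Sb[of E] by (simp add: S_def borel_lebesgue_sets)
    then obtain T where T: "closed T" "T \<subseteq> S E" "S E - T \<in> lmeasurable" "emeasure lebesgue (S E - T) < ennreal \<eta>'"
      by (rule sets_lebesgue_inner_closed[OF _ eta'])
    have "S E - T \<in> sets borel" unfolding S_def by (rule sets.Diff[OF Sb[of E] borel_closed[OF T(1)]])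
    hence "emeasure lborel (S E - T) < ennreal \<eta>'" using T(4) lebesgue_borel_emeasure by simp
    thus "\<exists>T. closed T \<and> T \<subseteq> S E \<and> emeasure lborel (S E - T) < ennreal \<eta>'" using T by blast
  qed
  from bchoice[OF this] obtain T where T0: "\<forall>E\<in>Es. closed (T E) \<and> T E \<subseteq> S E \<and> emeasure lborel (S E - T E) < ennreal \<eta>'"
    by blast
  have T: "\<And>E. E \<in> Es \<Longrightarrow> closed (T E)" "\<And>E. E \<in> Es \<Longrightarrow> T E \<subseteq> S E"
      "\<And>E. E \<in> Es \<Longrightarrow> emeasure lborel (S E - T E) < ennreal \<eta>'"
    using T0 by auto
  define K where "K E = T E \<union> ({0, 1} \<inter> S E)" for E
  have Kc: "closed (K E)" if "E \<in> Es" for E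
  proof -
    have "closed ({0, 1} \<inter> S E)" by (rule finite_imp_closed) simp
    thus ?thesis unfolding K_def using T(1)[OF that] by (rule closed_Un[rotated])
  qed
  have KS: "K E \<subseteq> S E" if "E \<in> Es" for E unfolding K_def using T(2)[OF that] by blast
  have Kdisj: "K E \<inter> K E' = {}" if "E \<noteq> E'" "E \<in> Es" "E' \<in> Es" for E E'
    using KS[OF that(2)] KS[OF that(3)] that(1) unfolding S_def by blast
  define O' where "O' E = (\<Union>E'\<in>Es - {E}. K E')" for E
  have Oc: "closed (O' E)" for E unfolding O'_def using Kc finEs by (intro closed_UN) simp_all
  have "\<forall>E\<in>Es - {E0}. \<exists>f::real \<Rightarrow> real. continuous_on UNIV f \<and> (\<forall>x. f x \<in> closed_segment 1 0) \<and>
          (\<forall>x\<in>K E. f x = 1) \<and> (\<forall>x\<in>O' E. f x = 0)"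
  proof
    fix E assume E: "E \<in> Es - {E0}"
    have "K E \<inter> O' E = {}" unfolding O'_def using Kdisj E by blast
    from Urysohn[OF Kc Oc this, of 1 0] E obtain f :: "real \<Rightarrow> real" where
      "continuous_on UNIV f" "\<And>x. f x \<in> closed_segment 1 0" "\<And>x. x \<in> K E \<Longrightarrow> f x = 1" "\<And>x. x \<in> O' E \<Longrightarrow> f x = 0"
      by blast
    thus "\<exists>f::real \<Rightarrow> real. continuous_on UNIV f \<and> (\<forall>x. f x \<in> closed_segment 1 0) \<and>
          (\<forall>x\<in>K E. f x = 1) \<and> (\<forall>x\<in>O' E. f x = 0)" by blast
  qed
  from bchoice[OF this] obtain f :: "'e \<Rightarrow> real \<Rightarrow> real" where f0: "\<forall>E\<in>Es - {E0}. continuous_on UNIV (f E) \<and> (\<forall>x. f E x \<in> closed_segment 1 0) \<and>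
          (\<forall>x\<in>K E. f E x = 1) \<and> (\<forall>x\<in>O' E. f E x = 0)"
    by blast
  have f: "\<And>E. E \<in> Es - {E0} \<Longrightarrow> continuous_on UNIV (f E)"
     "\<And>E x. E \<in> Es - {E0} \<Longrightarrow> f E x \<in> closed_segment 1 0"
     "\<And>E x. E \<in> Es - {E0} \<Longrightarrow> x \<in> K E \<Longrightarrow> f E x = 1"
     "\<And>E x. E \<in> Es - {E0} \<Longrightarrow> x \<in> O' E \<Longrightarrow> f E x = 0"
    using f0 by auto
  have f01: "0 \<le> f E x \<and> f E x \<le> 1" if "E \<in> Es - {E0}" for E x
    using f(2)[OF that, of x] by (auto simp: closed_segment_eq_real_ivl)
  define den where "den x = max 1 (\<Sum>E\<in>Es - {E0}. f E x)" for x
  define c2 where "c2 x E = (if E = E0 then 1 - (\<Sum>E'\<in>Es - {E0}. f E' x) / den x else if E \<in> Es then f E x / den x else 0)" for x E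
  have den1: "den x \<ge> 1" for x by (simp add: den_def)
  have sumle: "(\<Sum>E'\<in>Es - {E0}. f E' x) / den x \<le> 1" for x
  proof -
    have "(\<Sum>E'\<in>Es - {E0}. f E' x) \<le> den x" by (simp add: den_def)
    thus ?thesis using den1[of x] by (simp add: divide_le_eq_1)
  qed
  have sumnn: "0 \<le> (\<Sum>E'\<in>Es - {E0}. f E' x)" for x using f01 by (auto intro: sum_nonneg)
  have c2nn: "0 \<le> c2 x E" if "E \<in> Es" for x E
    using f01[of E x] sumle[of x] den1[of x] that by (auto simp: c2_def)
  have c2sum: "(\<Sum>E\<in>Es. c2 x E) = 1" for x
  proof -
    have "(\<Sum>E\<in>Es. c2 x E) = c2 x E0 + (\<Sum>E\<in>Es - {E0}. c2 x E)"
      using E0 finEs by (simp add: sum.remove)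
    also have "(\<Sum>E\<in>Es - {E0}. c2 x E) = (\<Sum>E\<in>Es - {E0}. f E x / den x)"
      by (rule sum.cong) (auto simp: c2_def)
    also have "\<dots> = (\<Sum>E\<in>Es - {E0}. f E x) / den x" by (simp add: sum_divide_distrib)
    finally show ?thesis by (simp add: c2_def)
  qed
  have vp2: "vp Es c2" unfolding vp_def using c2nn c2sum by auto
  have cont: "continuous_on UNIV (\<lambda>d. c2 d E)" for E
  proof -
    have fc: "continuous_on UNIV (\<lambda>x. \<Sum>E'\<in>Es - {E0}. f E' x)"
      by (rule continuous_on_sum) (use f(1) in auto)
    have dc: "continuous_on UNIV den" unfolding den_def by (intro continuous_on_max continuous_on_const fc)
    have dne: "\<forall>x\<in>UNIV. den x \<noteq> 0" using den1 by (metis not_one_le_zero)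
    show ?thesis
    proof (cases "E = E0")
      case True
      then show ?thesis unfolding c2_def
        by simp (intro continuous_on_diff continuous_on_const continuous_on_divide fc dc dne)
    next
      case False
      show ?thesis
      proof (cases "E \<in> Es")
        case True
        with False have EE: "E \<in> Es - {E0}" by auto
        show ?thesis unfolding c2_def using False True
          by simp (intro continuous_on_divide f(1)[OF EE] dc dne)
      next
        case False2: False
        show ?thesis unfolding c2_def using False False2 by simp
      qed
    qed
  qed
  have exact: "c2 x E' = (if E' = E then 1 else 0)" if E: "E \<in> Es" and x: "x \<in> K E" and E': "E' \<in> Es" for x E E'
  proof -
    have fz: "f E'' x = 0" if "E'' \<in> Es - {E0}" "E'' \<noteq> E" for E''
      using f(4)[OF that(1)] x E that unfolding O'_def by auto
    show ?thesis
    proof (cases "E = E0")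
      case True
      have s0: "(\<Sum>E''\<in>Es - {E0}. f E'' x) = 0" using fz True by (intro sum.neutral) auto
      hence "den x = 1" by (simp add: den_def)
      thus ?thesis using s0 True fz[of E'] E' by (auto simp: c2_def)
    next
      case False
      have fE: "f E x = 1" using f(3)[of E x] E x False by auto
      have s1: "(\<Sum>E''\<in>Es - {E0}. f E'' x) = 1"
      proof -
        have "(\<Sum>E''\<in>Es - {E0}. f E'' x) = f E x + (\<Sum>E''\<in>Es - {E0} - {E}. f E'' x)"
          using E False finEs by (simp add: sum.remove)
        also have "(\<Sum>E''\<in>Es - {E0} - {E}. f E'' x) = 0" using fz by (intro sum.neutral) auto
        finally show ?thesis using fE by simp
      qed
      hence "den x = 1" by (simp add: den_def)
      thus ?thesis using s1 fE fz[of E'] E' False by (auto simp: c2_def)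
    qed
  qed
  have err0K: "err c1 c2 x = 0" if E: "E \<in> Es" and x: "x \<in> K E" for x E
  proof -
    have "p x = E" using KS[OF E] x by (auto simp: S_def)
    hence "c1 x E' = c2 x E'" if "E' \<in> Es" for E' using exact[OF E x that] by (simp add: c1_def)
    thus ?thesis unfolding err_def by (intro sum.neutral) auto
  qed
  have e0: "err c1 c2 0 = 0"
  proof -
    have "0 \<in> K (p 0)" using pE[of 0] by (auto simp: K_def S_def)
    moreover have "p 0 \<in> Es" using pE[of 0] by simp
    ultimately show ?thesis using err0K by blast
  qed
  have e1: "err c1 c2 1 = 0"
  proof -
    have "1 \<in> K (p 1)" using pE[of 1] by (auto simp: K_def S_def)
    moreover have "p 1 \<in> Es" using pE[of 1] by simp
    ultimately show ?thesis using err0K by blast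
  qed
  define B where "B = (\<Union>E\<in>Es. S E - T E)"
  have Bb: "B \<in> sets borel" unfolding B_def using Sb T(1) finEs by (auto simp: S_def)
  have errle: "indicator {0..1} d * err c1 c2 d \<le> N * indicator B d" for d
  proof (cases "d \<in> {0..1}")
    case True
    have pd: "p d \<in> Es" using pE[OF True] .
    show ?thesis
    proof (cases "d \<in> B")
      case False
      have "d \<in> S (p d)" using True by (simp add: S_def)
      hence "d \<in> T (p d)" using False pd unfolding B_def by auto
      hence "d \<in> K (p d)" by (simp add: K_def)
      then show ?thesis using err0K[OF pd] True False by simp
    next
      case inB: True
      have "err c1 c2 d \<le> (\<Sum>E\<in>Es. 1)" unfolding err_def
      proof (rule sum_mono)
        fix E assume E: "E \<in> Es"
        have "0 \<le> c2 d E" "c2 d E \<le> 1" using c2nn[OF E] vp_le1[OF vp2 finEs True E] by auto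
        thus "\<bar>c1 d E - c2 d E\<bar> \<le> 1" by (auto simp: c1_def)
      qed
      then show ?thesis using True inB by (simp add: N_def)
    qed
  qed (simp add: N_def)
  have "(\<integral>\<^sup>+d. ennreal (indicator {0..1} d * err c1 c2 d) \<partial>lborel) \<le> (\<integral>\<^sup>+d. ennreal N * indicator B d \<partial>lborel)"
  proof (rule nn_integral_mono)
    fix d
    have "ennreal (indicator {0..1} d * err c1 c2 d) \<le> ennreal (N * indicator B d)" by (rule ennreal_leI[OF errle])
    also have "\<dots> = ennreal N * indicator B d" by (simp split: split_indicator)
    finally show "ennreal (indicator {0..1} d * err c1 c2 d) \<le> ennreal N * indicator B d" .
  qed
  also have "\<dots> = ennreal N * emeasure lborel B"
    using Bb by (simp add: nn_integral_cmult_indicator)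
  also have "emeasure lborel B \<le> (\<Sum>E\<in>Es. emeasure lborel (S E - T E))"
    unfolding B_def using Sb T(1) finEs by (intro emeasure_subadditive_finite) (auto simp: S_def)
  also have "\<dots> \<le> (\<Sum>E\<in>Es. ennreal \<eta>')" by (rule sum_mono) (use T(3) in \<open>auto intro: less_imp_le\<close>)
  also have "\<dots> = ennreal (N * \<eta>')" using eta' by (simp add: N_def ennreal_mult ennreal_of_nat_eq_real_of_nat)
  finally have "(\<integral>\<^sup>+d. ennreal (indicator {0..1} d * err c1 c2 d) \<partial>lborel) \<le> ennreal N * ennreal (N * \<eta>')"
    by (simp add: mult_left_mono)
  also have "\<dots> = ennreal \<eta>" using Npos eta by (simp add: ennreal_mult[symmetric] \<eta>'_def)
  finally show ?thesis using vp2 cont e0 e1 by blast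
qed

end

lemma lim_abs_bound:
  fixes X :: "nat \<Rightarrow> real"
  assumes "convergent X" "\<And>n. \<bar>X n\<bar> \<le> K"
  shows "\<bar>lim X\<bar> \<le> K"
proof -
  have "X \<longlonglongrightarrow> lim X" using assms(1) by (simp add: convergent_LIMSEQ_iff)
  hence "(\<lambda>n. \<bar>X n\<bar>) \<longlonglongrightarrow> \<bar>lim X\<bar>" by (rule tendsto_rabs)
  thus ?thesis by (rule LIMSEQ_le_const2) (use assms(2) in auto)
qed

theorem proposition3:
  fixes A :: "'a set" and R :: "'a \<Rightarrow> theta \<Rightarrow> real"
    and Es :: "'e set" and X :: "'e \<Rightarrow> 'x set" and Q :: "'x \<Rightarrow> 'e \<Rightarrow> theta \<Rightarrow> real"
    and Lam r :: real and p :: "real \<Rightarrow> 'e" and I :: "real set" and \<epsilon> :: real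
  assumes "model_ok A Es X Q Lam r"
    and "det_markov_policy Es p I"
    and "\<forall>d\<in>{0..1}. det_payoff A R Es X Q Lam r p I d = optval A R Es X Q Lam r d"
    and "\<epsilon> > 0"
  shows "\<exists>pc Ic. cont_rand_markov_policy Es pc Ic \<and>
           set_integrable lborel {0..1::real}
             (\<lambda>d. optval A R Es X Q Lam r d - rand_payoff A R Es X Q Lam r pc Ic d) \<and>
           (LINT d:{0..1}|lborel. \<bar>optval A R Es X Q Lam r d - rand_payoff A R Es X Q Lam r pc Ic d\<bar>) < \<epsilon>"
proof -
  note mok = assms(1)
  interpret mdl A R Es X Q Lam r by unfold_locales (rule mok)
  have dm: "\<forall>d\<in>{0..1}. p d \<in> Es" "p \<in> measurable (restrict_space borel {0..1::real}) (count_space Es)"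
      "I \<in> sets borel" "I \<subseteq> {0..1}"
    using assms(2) by (auto simp: det_markov_policy_def)
  have opt: "\<And>d. d \<in> {0..1} \<Longrightarrow> optval A R Es X Q Lam r d = det_payoff A R Es X Q Lam r p I d"
    using assms(3) by auto
  have eps: "0 < \<epsilon>" by (rule assms(4))
  have LamP: "0 < Lam" and rP: "0 < r" and EsNE: "Es \<noteq> {}" using mok by (auto simp: model_ok_def)
  then obtain E0 where E0: "E0 \<in> Es" by blast
  define b where "b = Lam / (Lam + r)"
  have b0: "0 \<le> b" and b1: "b < 1" and b1': "b \<le> 1" using LamP rP by (auto simp: b_def)
  define g where "g = Gval A R"
  define s :: "real \<Rightarrow> real" where "s = indicator I"
  have sm[measurable]: "s \<in> borel_measurable borel" unfolding s_def using dm(3) by measurable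
  have s01: "\<And>d. d \<in> {0..1} \<Longrightarrow> 0 \<le> s d \<and> s d \<le> 1" by (simp add: s_def split: split_indicator)
  define p' where "p' d = (if d \<in> {0..1} then p d else E0)" for d
  have p'm: "p' \<in> measurable borel (count_space Es)"
  proof -
    have "(\<lambda>x. if x \<in> {0..1::real} then p x else E0) \<in> measurable borel (count_space Es)"
      using measurable_restrict_space_iff[of "{0..1::real}" borel E0 "count_space Es" p] dm(2) E0 by simp
    thus ?thesis by (simp add: p'_def[abs_def])
  qed
  have p'E: "\<And>d. d \<in> {0..1} \<Longrightarrow> p' d \<in> Es" using dm(1) by (simp add: p'_def)
  have Sb: "{d \<in> {0..1}. p' d = E} \<in> sets borel" for E
  proof (cases "E \<in> Es")
    case True
    have "p' -` {E} \<in> sets borel" by (rule measurable_sets_borel[OF p'm]) (use True in simp)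
    moreover have "{d \<in> {0..1}. p' d = E} = {0..1} \<inter> p' -` {E}" by auto
    ultimately show ?thesis by simp
  next
    case False
    hence e: "{d \<in> {0..1}. p' d = E} = {}" using p'E by auto
    show ?thesis unfolding e by (rule sets.empty_sets)
  qed
  define c1 where "c1 = (\<lambda>d E. if E = p d then 1 else (0::real))"
  define c1' where "c1' = (\<lambda>d E. if E = p' d then 1 else (0::real))"
  have c1'm[measurable]: "(\<lambda>d. c1' d E) \<in> borel_measurable borel" for E
  proof -
    have "(\<lambda>e. if E = e then 1 else (0::real)) \<in> measurable (count_space Es) borel" by simp
    from measurable_compose[OF p'm this] show ?thesis by (simp add: c1'_def o_def)
  qed
  have vp1': "vp Es c1'" unfolding vp_def c1'_def using p'E finEs by (auto simp: sum.delta)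
  have c11': "\<And>d E. d \<in> {0..1} \<Longrightarrow> E \<in> Es \<Longrightarrow> c1 d E = c1' d E" by (simp add: c1_def c1'_def p'_def)

  define \<delta> where "\<delta> = \<epsilon> * (1 - b) / (4 * (Mb + 1))"
  have \<delta>: "0 < \<delta>" using eps b1 Mb_nn by (simp add: \<delta>_def)
  obtain N where N: "b ^ N < \<delta>" using real_arch_pow_inv[OF \<delta> b1] by blast
  define \<tau> where "\<tau> = Mb * b * b ^ N / (1 - b)"
  have tau_nn: "0 \<le> \<tau>" using Mb_nn b0 b1 by (simp add: \<tau>_def)
  have tau: "2 * \<tau> < \<epsilon> / 2"
  proof -
    have "\<tau> \<le> Mb * b ^ N / (1 - b)"
    proof -
      have "b * b ^ N \<le> b ^ N" using b0 b1' by (intro mult_left_le_one_le) auto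
      hence "Mb * b * b ^ N \<le> Mb * b ^ N" using Mb_nn by (simp add: mult.assoc mult_left_mono)
      thus ?thesis unfolding \<tau>_def using b1 by (intro divide_right_mono) auto
    qed
    also have "\<dots> \<le> Mb * \<delta> / (1 - b)"
      using N Mb_nn b1 by (intro divide_right_mono mult_left_mono) auto
    also have "\<dots> = \<epsilon> / 4 * (Mb / (Mb + 1))"
    proof -
      have nz: "1 - b \<noteq> 0" "Mb + 1 \<noteq> 0" using b1 Mb_nn by auto
      have "\<delta> = \<epsilon> / (4 * (Mb + 1)) * (1 - b)" by (simp add: \<delta>_def)
      hence "\<delta> / (1 - b) = \<epsilon> / (4 * (Mb + 1))" using nz by simp
      hence "Mb * \<delta> / (1 - b) = Mb * (\<epsilon> / (4 * (Mb + 1)))" by (simp add: times_divide_eq_right[symmetric] del: times_divide_eq_right)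
      thus ?thesis by simp
    qed
    also have "\<dots> < \<epsilon> / 4"
      using eps Mb_nn by (simp add: mult_less_cancel_left1 del: times_divide_eq_right) 
    finally show ?thesis by simp
  qed
  define S where "S = (\<Sum>k<N. Ct ^ k)"
  have S_nn: "0 \<le> S" unfolding S_def using Ct_nn by (auto intro: sum_nonneg)
  define \<eta> where "\<eta> = \<epsilon> / (4 * (Mb + 1) * (S + 1))"
  have eta: "0 < \<eta>" using eps Mb_nn S_nn by (simp add: \<eta>_def)
  have MetaS: "Mb * \<eta> * S < \<epsilon> / 2"
  proof -
    have "Mb * \<eta> * S = \<epsilon> / 4 * (Mb / (Mb + 1)) * (S / (S + 1))"
    proof -
      have "S + 1 \<noteq> 0" "Mb + 1 \<noteq> 0" using S_nn Mb_nn by auto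
      thus ?thesis by (simp add: \<eta>_def field_simps)
    qed
    also have "\<dots> \<le> \<epsilon> / 4 * 1 * 1"
      using eps Mb_nn S_nn by (intro mult_mono) auto
    finally show ?thesis using eps by simp
  qed

  obtain c2 where c2: "vp Es c2" "\<forall>E. continuous_on UNIV (\<lambda>d. c2 d E)" "err c1' c2 0 = 0" "err c1' c2 1 = 0"
      "(\<integral>\<^sup>+d. ennreal (indicator {0..1} d * err c1' c2 d) \<partial>lborel) \<le> ennreal \<eta>"
    using cont_approx[OF E0 p'E Sb eta] unfolding c1'_def by blast
  have c2m[measurable]: "(\<lambda>d. c2 d E) \<in> borel_measurable borel" for E
    using c2(2) by (simp add: borel_measurable_continuous_onI)

  define V1 where "V1 n d = mV b Es X Q (Gval A R) s c1' n d" for n d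
  define V2 where "V2 n d = mV b Es X Q (Gval A R) s c2 n d" for n d
  have V1m[measurable]: "V1 n \<in> borel_measurable borel" for n
    unfolding V1_def[abs_def] by (rule mV_meas[OF sm c1'm])
  have V2m[measurable]: "V2 n \<in> borel_measurable borel" for n
    unfolding V2_def[abs_def] by (rule mV_meas[OF sm c2m])

  have hp1: "det_payoff A R Es X Q Lam r p I d = lim (\<lambda>n. mV b Es X Q (Gval A R) s c1 n d)" for d
  proof -
    have "\<And>n. hpay b Es X Q (Gval A R) (\<lambda>h d. indicator I d) (\<lambda>h d E. if E = p d then 1 else 0) n [] d
         = mV b Es X Q (Gval A R) s c1 n d"
      using hpay_mV[of b Es X Q "Gval A R" s c1] by (simp add: s_def c1_def)
    thus ?thesis by (simp add: det_payoff_def payoff_def b_def)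
  qed
  have hp2: "rand_payoff A R Es X Q Lam r c2 I d = lim (\<lambda>n. V2 n d)" for d
  proof -
    have "\<And>n. hpay b Es X Q (Gval A R) (\<lambda>h d. indicator I d) (\<lambda>h d E. c2 d E) n [] d = V2 n d"
      using hpay_mV[of b Es X Q "Gval A R" s c2] by (simp add: s_def V2_def)
    thus ?thesis by (simp add: rand_payoff_def payoff_def b_def)
  qed
  have P1: "optval A R Es X Q Lam r d = lim (\<lambda>n. V1 n d)" if d: "d \<in> {0..1}" for d
  proof -
    have "(\<lambda>n. mV b Es X Q (Gval A R) s c1 n d) = (\<lambda>n. V1 n d)"
      unfolding V1_def by (intro ext mV_cong[OF c11' d]) auto
    thus ?thesis using opt[OF d] hp1[of d] by simp
  qed

  have conv1: "convergent (\<lambda>n. V1 n d)" and tail1: "\<bar>lim (\<lambda>n. V1 n d) - V1 N d\<bar> \<le> \<tau>" if d: "d \<in> {0..1}" for d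
    using mV_conv(1)[OF vp1' s01 b0 b1 d] mV_conv(2)[OF vp1' s01 b0 b1 d, where N=N] unfolding V1_def \<tau>_def by auto
  have conv2: "convergent (\<lambda>n. V2 n d)" and tail2: "\<bar>lim (\<lambda>n. V2 n d) - V2 N d\<bar> \<le> \<tau>" if d: "d \<in> {0..1}" for d
    using mV_conv(1)[OF c2(1) s01 b0 b1 d] mV_conv(2)[OF c2(1) s01 b0 b1 d, where N=N] unfolding V2_def \<tau>_def by auto
  have bnd1: "\<bar>V1 n d\<bar> \<le> Mb" if d: "d \<in> {0..1}" for n d
    unfolding V1_def by (rule mV_bound[OF vp1' s01 b0 b1' d])
  have bnd2: "\<bar>V2 n d\<bar> \<le> Mb" if d: "d \<in> {0..1}" for n d
    unfolding V2_def by (rule mV_bound[OF c2(1) s01 b0 b1' d])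

  define Z where "Z d = indicator {0..1} d * (lim (\<lambda>n. V1 n d) - lim (\<lambda>n. V2 n d))" for d
  have Zeq: "(\<lambda>d. indicator {0..1} d *\<^sub>R (optval A R Es X Q Lam r d - rand_payoff A R Es X Q Lam r c2 I d)) = Z"
  proof
    fix d show "indicator {0..1} d *\<^sub>R (optval A R Es X Q Lam r d - rand_payoff A R Es X Q Lam r c2 I d) = Z d"
      by (cases "d \<in> {0..1}") (simp_all add: Z_def P1 hp2)
  qed
  have Zm: "Z \<in> borel_measurable borel"
  proof (rule borel_measurable_LIMSEQ_metric)
    show "(\<lambda>d. indicator {0..1} d * (V1 i d - V2 i d)) \<in> borel_measurable borel" for i by measurable
    fix d :: real
    show "(\<lambda>i. indicator {0..1} d * (V1 i d - V2 i d)) \<longlonglongrightarrow> Z d"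
    proof (cases "d \<in> {0..1}")
      case True
      have "(\<lambda>i. V1 i d) \<longlonglongrightarrow> lim (\<lambda>n. V1 n d)" using conv1[OF True] by (simp add: convergent_LIMSEQ_iff)
      moreover have "(\<lambda>i. V2 i d) \<longlonglongrightarrow> lim (\<lambda>n. V2 n d)" using conv2[OF True] by (simp add: convergent_LIMSEQ_iff)
      ultimately show ?thesis using True unfolding Z_def by (intro tendsto_mult tendsto_diff tendsto_const) simp_all
    next
      case False
      then show ?thesis by (simp add: Z_def)
    qed
  qed
  have Zb: "\<bar>Z d\<bar> \<le> 2 * Mb * indicator {0..1} d" for d
  proof (cases "d \<in> {0..1}")
    case True
    have "\<bar>lim (\<lambda>n. V1 n d)\<bar> \<le> Mb" by (rule lim_abs_bound[OF conv1[OF True] bnd1[OF True]])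
    moreover have "\<bar>lim (\<lambda>n. V2 n d)\<bar> \<le> Mb" by (rule lim_abs_bound[OF conv2[OF True] bnd2[OF True]])
    ultimately show ?thesis using True by (simp add: Z_def)
  qed (simp add: Z_def)
  have Zi: "integrable lborel Z"
  proof -
    have i1: "integrable lborel (\<lambda>d. 2 * Mb * indicator {0..1::real} d)"
      by (intro integrable_mult_right integrable_real_indicator) auto
    have i2: "Z \<in> borel_measurable lborel" using Zm by simp
    have i3: "AE x in lborel. norm (Z x) \<le> norm (2 * Mb * indicator {0..1::real} x)"
      using Zb Mb_nn by (auto simp: abs_mult split: split_indicator)
    show ?thesis by (rule Bochner_Integration.integrable_bound[OF i1 i2 i3])
  qed
  have SI: "set_integrable lborel {0..1::real} (\<lambda>d. optval A R Es X Q Lam r d - rand_payoff A R Es X Q Lam r c2 I d)"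
    unfolding set_integrable_def Zeq by (rule Zi)

  define Dn where "Dn = (\<lambda>n y. \<bar>mV b Es X Q (Gval A R) s c1' n y - mV b Es X Q (Gval A R) s c2 n y\<bar>)"
  have DB: "(\<integral>\<^sup>+d. ennreal (indicator {0..1} d * Dn N d) \<partial>lborel)
      \<le> ennreal Mb * (\<integral>\<^sup>+d. ennreal (indicator {0..1} d * err c1' c2 d) \<partial>lborel) * (\<Sum>k<N. ennreal Ct ^ k)"
    using D_bound[OF vp1' c2(1) s01 b0 b1' sm c1'm c2m c2(3) c2(4), where n=N] unfolding Dn_def by blast
  have DB2: "(\<integral>\<^sup>+d. ennreal (indicator {0..1} d * Dn N d) \<partial>lborel) \<le> ennreal (Mb * \<eta> * S)"
  proof -
    have "(\<Sum>k<N. ennreal Ct ^ k) = ennreal S" unfolding S_def using Ct_nn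
      by (simp add: ennreal_power sum_ennreal)
    hence "ennreal Mb * (\<integral>\<^sup>+d. ennreal (indicator {0..1} d * err c1' c2 d) \<partial>lborel) * (\<Sum>k<N. ennreal Ct ^ k)
        \<le> ennreal Mb * ennreal \<eta> * ennreal S"
      using c2(5) by (simp add: mult_left_mono mult_right_mono)
    also have "\<dots> = ennreal (Mb * \<eta> * S)" using Mb_nn eta S_nn by (simp add: ennreal_mult)
    finally show ?thesis using DB by (rule order.trans[rotated])
  qed
  have Zpt: "ennreal \<bar>Z d\<bar> \<le> ennreal (2 * \<tau>) * indicator {0..1} d + ennreal (indicator {0..1} d * Dn N d)" for d
  proof (cases "d \<in> {0..1}")
    case True
    have "\<bar>Z d\<bar> \<le> \<bar>lim (\<lambda>n. V1 n d) - V1 N d\<bar> + \<bar>V1 N d - V2 N d\<bar> + \<bar>V2 N d - lim (\<lambda>n. V2 n d)\<bar>"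
      using True by (simp add: Z_def)
    also have "\<dots> \<le> \<tau> + Dn N d + \<tau>"
      using tail1[OF True] tail2[OF True] by (simp add: Dn_def V1_def V2_def abs_minus_commute)
    finally have "\<bar>Z d\<bar> \<le> 2 * \<tau> + Dn N d" by simp
    hence "ennreal \<bar>Z d\<bar> \<le> ennreal (2 * \<tau> + Dn N d)" by (rule ennreal_leI)
    also have "\<dots> = ennreal (2 * \<tau>) + ennreal (Dn N d)"
      using tau_nn by (simp add: Dn_def ennreal_plus)
    finally show ?thesis using True by simp
  qed (simp add: Z_def)
  have "(\<integral>\<^sup>+d. ennreal \<bar>Z d\<bar> \<partial>lborel) \<le> (\<integral>\<^sup>+d. ennreal (2 * \<tau>) * indicator {0..1} d + ennreal (indicator {0..1} d * Dn N d) \<partial>lborel)"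
    by (rule nn_integral_mono) (rule Zpt)
  also have "\<dots> = ennreal (2 * \<tau>) * emeasure lborel {0..1::real} + (\<integral>\<^sup>+d. ennreal (indicator {0..1} d * Dn N d) \<partial>lborel)"
  proof -
    have Dm: "Dn N \<in> borel_measurable borel" unfolding Dn_def
      using V1m[of N] V2m[of N] unfolding V1_def[abs_def] V2_def[abs_def] by measurable
    have m1: "(\<lambda>d. ennreal (2 * \<tau>) * indicator {0..1::real} d) \<in> borel_measurable lborel" by measurable
    have m2: "(\<lambda>d. ennreal (indicator {0..1} d * Dn N d)) \<in> borel_measurable lborel" using Dm by measurable
    show ?thesis using nn_integral_add[OF m1 m2] by (simp add: nn_integral_cmult_indicator)
  qed
  also have "\<dots> \<le> ennreal (2 * \<tau>) + ennreal (Mb * \<eta> * S)" using DB2 by (simp add: add_left_mono)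
  also have "\<dots> = ennreal (2 * \<tau> + Mb * \<eta> * S)" using tau_nn Mb_nn eta S_nn by (simp add: ennreal_plus)
  finally have NI: "(\<integral>\<^sup>+d. ennreal \<bar>Z d\<bar> \<partial>lborel) \<le> ennreal (2 * \<tau> + Mb * \<eta> * S)" .
  have absZ: "(\<lambda>d. indicator {0..1} d *\<^sub>R \<bar>optval A R Es X Q Lam r d - rand_payoff A R Es X Q Lam r c2 I d\<bar>) = (\<lambda>d. \<bar>Z d\<bar>)"
  proof
    fix d
    have "\<bar>Z d\<bar> = \<bar>indicator {0..1} d *\<^sub>R (optval A R Es X Q Lam r d - rand_payoff A R Es X Q Lam r c2 I d)\<bar>"
      using fun_cong[OF Zeq, of d] by simp
    thus "indicator {0..1} d *\<^sub>R \<bar>optval A R Es X Q Lam r d - rand_payoff A R Es X Q Lam r c2 I d\<bar> = \<bar>Z d\<bar>"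
      by (simp add: abs_mult split: split_indicator)
  qed
  have "ennreal (LINT d:{0..1}|lborel. \<bar>optval A R Es X Q Lam r d - rand_payoff A R Es X Q Lam r c2 I d\<bar>)
      = ennreal (integral\<^sup>L lborel (\<lambda>d. \<bar>Z d\<bar>))"
    unfolding set_lebesgue_integral_def absZ ..
  also have "\<dots> = (\<integral>\<^sup>+d. ennreal \<bar>Z d\<bar> \<partial>lborel)"
    by (rule nn_integral_eq_integral[symmetric]) (use Zi in auto)
  also have "\<dots> < ennreal \<epsilon>"
    using NI tau MetaS eps by (simp add: ennreal_lessI order.strict_trans1)
  finally have "(LINT d:{0..1}|lborel. \<bar>optval A R Es X Q Lam r d - rand_payoff A R Es X Q Lam r c2 I d\<bar>) < \<epsilon>"
    using eps by (cases "0 \<le> (LINT d:{0..1}|lborel. \<bar>optval A R Es X Q Lam r d - rand_payoff A R Es X Q Lam r c2 I d\<bar>)") (simp_all add: ennreal_less_iff)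
  moreover have "cont_rand_markov_policy Es c2 I"
    unfolding cont_rand_markov_policy_def using c2(1) c2(2) dm(3,4)
    by (auto simp: vp_def intro: continuous_on_subset)
  ultimately show ?thesis using SI by blast
qed


end
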